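(* For all integers $1\le t\le n$, the $t$-out-of-$n$ function $f_{t,n}:\{0,1\}^n\to\{0,1\}$, defined by $f_{t,n}(x)=1$ if $\sum_{i=1}^n x_i\ge t$ and $f_{t,n}(x)=0$ otherwise, has a quadratization using $\lceil n/2\rceil$ auxiliary variables.
   Context: A quadratization of $f:\{0,1\}^n\to\mathbb{R}$ using $m$ auxiliary variables is a polynomial $g(x,y)$ of degree at most $2$ in $x_1,\ldots,x_n,y_1,\ldots,y_m$ such that $f(x)=\min\{g(x,y):y\in\{0,1\}^m\}$ for all $x\in\{0,1\}^n$. *)

theory Defs
  imports Complex_Main
begin

text \<open>Variables of a quadratization: Inl i stands for x_i (i < n), Inr j for y_j (j < m).\<close>

definition vars :: "nat \<Rightarrow> nat \<Rightarrow> (nat + nat) set" where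
  "vars n m = Inl ` {..<n} \<union> Inr ` {..<m}"

definition eval_quad ::
  "nat \<Rightarrow> nat \<Rightarrow> real \<Rightarrow> (nat + nat \<Rightarrow> real) \<Rightarrow> (nat + nat \<Rightarrow> nat + nat \<Rightarrow> real)
     \<Rightarrow> (nat + nat \<Rightarrow> real) \<Rightarrow> real" where
  "eval_quad n m c a b z =
     c + (\<Sum>v\<in>vars n m. a v * z v) + (\<Sum>v\<in>vars n m. \<Sum>w\<in>vars n m. b v w * z v * z w)"

definition point :: "(nat \<Rightarrow> bool) \<Rightarrow> (nat \<Rightarrow> bool) \<Rightarrow> nat + nat \<Rightarrow> real" where
  "point x y v = (case v of Inl i \<Rightarrow> (if x i then 1 else 0) | Inr j \<Rightarrow> (if y j then 1 else 0))"

definition cube :: "nat \<Rightarrow> (nat \<Rightarrow> bool) set" where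
  "cube k = {x. \<forall>i. k \<le> i \<longrightarrow> \<not> x i}"

definition is_quadratization ::
  "nat \<Rightarrow> ((nat \<Rightarrow> bool) \<Rightarrow> real) \<Rightarrow> nat \<Rightarrow> real \<Rightarrow> (nat + nat \<Rightarrow> real)
     \<Rightarrow> (nat + nat \<Rightarrow> nat + nat \<Rightarrow> real) \<Rightarrow> bool" where
  "is_quadratization n f m c a b \<longleftrightarrow>
     (\<forall>x\<in>cube n. f x = Min ((\<lambda>y. eval_quad n m c a b (point x y)) ` cube m))"

definition has_quadratization :: "nat \<Rightarrow> ((nat \<Rightarrow> bool) \<Rightarrow> real) \<Rightarrow> nat \<Rightarrow> bool" where
  "has_quadratization n f m \<longleftrightarrow> (\<exists>c a b. is_quadratization n f m c a b)"

definition t_out_of_n :: "nat \<Rightarrow> nat \<Rightarrow> (nat \<Rightarrow> bool) \<Rightarrow> real" where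
  "t_out_of_n t n x = (if card {i. i < n \<and> x i} \<ge> t then 1 else 0)"

end

theory Submission
  imports Defs
begin

lemma cube_finite: "finite (cube m)"
proof -
  have "cube m \<subseteq> (\<lambda>A i. i \<in> A) ` Pow {..<m}"
  proof
    fix y assume "y \<in> cube m"
    hence "y = (\<lambda>i. i \<in> {i. i < m \<and> y i})" unfolding cube_def fun_eq_iff by (metis (mono_tags) mem_Collect_eq not_le)
    thus "y \<in> (\<lambda>A i. i \<in> A) ` Pow {..<m}" by blast
  qed
  thus ?thesis by (rule finite_subset) auto
qed

lemma finite_vars: "finite (vars n m)" by (simp add: vars_def)

lemma eval_eq:
  fixes L :: "nat + nat \<Rightarrow> real" and u :: "nat + nat"
  assumes u: "u \<in> vars n m"
  shows "eval_quad n m 2 (\<lambda>v. -3/2 * L v - (if v = u then 1 else 0)) (\<lambda>v w. L v * L w / 2) z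
    = 2 - 3/2 * (\<Sum>v\<in>vars n m. L v * z v) - z u + (\<Sum>v\<in>vars n m. L v * z v)^2 / 2"
proof -
  let ?V = "vars n m"
  have f: "finite ?V" by (rule finite_vars)
  have 1: "(\<Sum>v\<in>?V. (-3/2 * L v - (if v = u then 1 else 0)) * z v)
      = -3/2 * (\<Sum>v\<in>?V. L v * z v) - (\<Sum>v\<in>?V. (if v = u then z v else 0))"
  proof -
    have "\<And>v. (-3/2 * L v - (if v = u then 1 else 0)) * z v = -3/2 * (L v * z v) - (if v = u then z v else 0)"
      by (auto simp: algebra_simps)
    thus ?thesis by (simp add: sum_subtractf sum_distrib_left)
  qed
  have 2: "(\<Sum>v\<in>?V. (if v = u then z v else 0)) = z u" using f u by (simp add: sum.delta)
  have 3: "(\<Sum>v\<in>?V. \<Sum>w\<in>?V. L v * L w / 2 * z v * z w) = (\<Sum>v\<in>?V. L v * z v)^2 / 2"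
  proof -
    have "(\<Sum>v\<in>?V. L v * z v)^2 = (\<Sum>v\<in>?V. \<Sum>w\<in>?V. (L v * z v) * (L w * z w))"
      by (simp add: power2_eq_square sum_product)
    also have "\<dots> / 2 = (\<Sum>v\<in>?V. \<Sum>w\<in>?V. L v * L w / 2 * z v * z w)"
      by (simp add: sum_divide_distrib mult_ac)
    finally show ?thesis by simp
  qed
  show ?thesis unfolding eval_quad_def 1 2 3 by simp
qed

lemma count_sum: "(\<Sum>i<(n::nat). if x i then 1 else 0 :: real) = real (card {i. i < n \<and> x i})"
proof (induction n)
  case 0 then show ?case by simp
next
  case (Suc n)
  have "{i. i < Suc n \<and> x i} = (if x n then insert n {i. i < n \<and> x i} else {i. i < n \<and> x i})"
    by (auto simp: less_Suc_eq)
  then show ?case using Suc by (simp add: card_insert_if)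
qed


definition LL :: "nat \<Rightarrow> real \<Rightarrow> nat + nat \<Rightarrow> real" where
  "LL m k v = (case v of Inl i \<Rightarrow> 1 | Inr j \<Rightarrow> if j = m - 1 then k else -2)"

lemma T_eq:
  assumes "1 \<le> m"
  shows "(\<Sum>v\<in>vars n m. LL m k v * point x y v)
    = real (card {i. i < n \<and> x i}) - 2 * real (card {j. j < m - 1 \<and> y j}) + k * (if y (m-1) then 1 else 0)"
proof -
  have d: "Inl ` {..<n} \<inter> Inr ` {..<m} = ({} :: (nat+nat) set)" by auto
  have "(\<Sum>v\<in>vars n m. LL m k v * point x y v)
     = (\<Sum>v\<in>Inl ` {..<n}. LL m k v * point x y v) + (\<Sum>v\<in>Inr ` {..<m}. LL m k v * point x y v)"
    unfolding vars_def by (rule sum.union_disjoint) (use d in auto)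
  also have "(\<Sum>v\<in>Inl ` {..<n}. LL m k v * point x y v) = (\<Sum>i<n. if x i then 1 else 0)"
    by (simp add: sum.reindex LL_def point_def)
  also have "(\<Sum>v\<in>Inr ` {..<m}. LL m k v * point x y v) = (\<Sum>j<m. LL m k (Inr j) * point x y (Inr j))"
    by (simp add: sum.reindex)
  also have "\<dots> = (\<Sum>j<m-1. LL m k (Inr j) * point x y (Inr j)) + LL m k (Inr (m-1)) * point x y (Inr (m-1))"
  proof -
    have "m = Suc (m-1)" using assms by simp
    then obtain p where p: "m = Suc p" "m - 1 = p" by blast
    show ?thesis by (simp add: p)
  qed
  also have "(\<Sum>j<m-1. LL m k (Inr j) * point x y (Inr j)) = -2 * (\<Sum>j<m-1. if y j then 1 else 0)"
    by (simp add: LL_def point_def sum_distrib_left)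
  finally show ?thesis by (simp add: count_sum LL_def point_def)
qed


lemma int_prod_nonneg: "(T - 1) * (T - 2) \<ge> (0::int)"
  by (cases "T \<le> 1") (auto intro: mult_nonpos_nonpos mult_nonneg_nonneg)

lemma int_prod_ge2: "T \<ge> 3 \<Longrightarrow> (T - 1) * (T - 2) \<ge> (2::int)"
proof -
  assume "T \<ge> 3"
  hence "(T - 1) * (T - 2) \<ge> 2 * 1" by (intro mult_mono) auto
  thus ?thesis by simp
qed

definition GG :: "real \<Rightarrow> real \<Rightarrow> real" where
  "GG T zl = 2 - 3/2 * T - zl + T^2 / 2"

lemma GG_alt: "GG (of_int T) zl = 1 - zl + of_int ((T - 1) * (T - 2)) / 2"
  by (simp add: GG_def power2_eq_square field_simps)

lemma GG_lb0: "GG (of_int T) zl \<ge> 0" if "zl \<le> 1"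
proof -
  obtain Q where Q: "Q = real_of_int ((T - 1) * (T - 2))" by blast
  have "0 \<le> Q" unfolding Q using int_prod_nonneg[of T] by (simp only: of_int_0_le_iff)
  thus ?thesis using that unfolding GG_alt Q[symmetric] by simp
qed

lemma GG_lb1: "GG (of_int T) 0 \<ge> 1"
proof -
  obtain Q where Q: "Q = real_of_int ((T - 1) * (T - 2))" by blast
  have "0 \<le> Q" unfolding Q using int_prod_nonneg[of T] by (simp only: of_int_0_le_iff)
  thus ?thesis unfolding GG_alt Q[symmetric] by simp
qed

lemma GG_lb1': "GG (of_int T) 1 \<ge> 1" if "T \<ge> 3"
proof -
  obtain Q where Q: "Q = real_of_int ((T - 1) * (T - 2))" by blast
  have "2 \<le> Q" unfolding Q using int_prod_ge2[of T] that
    by (metis of_int_le_iff of_int_numeral)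
  thus ?thesis unfolding GG_alt Q[symmetric] by simp
qed

lemma GG_eq: "T = 1 \<or> T = 2 \<Longrightarrow> GG (of_int T) zl = 1 - zl"
  unfolding GG_alt by auto

lemma value_eq:
  assumes "1 \<le> m"
  shows "eval_quad n m 2 (\<lambda>v. -3/2 * LL m (real (2*m+1) - real t) v - (if v = Inr (m-1) then 1 else 0))
      (\<lambda>v w. LL m (real (2*m+1) - real t) v * LL m (real (2*m+1) - real t) w / 2) (point x y)
    = GG (of_int (int (card {i. i < n \<and> x i}) - 2 * int (card {j. j < m - 1 \<and> y j})
           + (int (2*m+1) - int t) * (if y (m-1) then 1 else 0))) (of_int (if y (m-1) then 1 else 0))"
proof -
  have u: "Inr (m-1) \<in> vars n m" using assms by (auto simp: vars_def)
  show ?thesis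
    unfolding eval_eq[OF u] T_eq[OF assms] GG_def by (simp add: point_def)
qed

lemma main:
  assumes "1 \<le> t" "t \<le> n" "n \<le> 2*m" "1 \<le> m"
  shows "is_quadratization n (t_out_of_n t n) m 2
     (\<lambda>v. -3/2 * LL m (real (2*m+1) - real t) v - (if v = Inr (m-1) then 1 else 0))
     (\<lambda>v w. LL m (real (2*m+1) - real t) v * LL m (real (2*m+1) - real t) w / 2)"
  unfolding is_quadratization_def
proof
  fix x assume x: "x \<in> cube n"
  define S where "S = card {i. i < n \<and> x i}"
  have Sn: "S \<le> n" unfolding S_def
    using card_mono[of "{..<n}" "{i. i < n \<and> x i}"] by auto
  let ?V = "\<lambda>y. eval_quad n m 2 (\<lambda>v. -3/2 * LL m (real (2*m+1) - real t) v - (if v = Inr (m-1) then 1 else 0))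
      (\<lambda>v w. LL m (real (2*m+1) - real t) v * LL m (real (2*m+1) - real t) w / 2) (point x y)"
  define Ti where "Ti y = int S - 2 * int (card {j. j < m - 1 \<and> y j})
           + (int (2*m+1) - int t) * (if y (m-1) then 1 else 0)" for y
  have V: "?V y = GG (of_int (Ti y)) (of_int (if y (m-1) then 1 else 0))" for y
    unfolding value_eq[OF assms(4)] Ti_def S_def ..
  have cardY: "card {j. j < m - 1 \<and> y j} \<le> m - 1" for y
    using card_mono[of "{..<m-1}" "{j. j < m - 1 \<and> y j}"] by auto
  have lb: "t_out_of_n t n x \<le> ?V y" for y
  proof (cases "t \<le> S")
    case True
    show ?thesis
    proof (cases "y (m-1)")
      case True
      have "Ti y \<ge> 3" unfolding Ti_def using True `t \<le> S` cardY[of y] assms by simp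
      thus ?thesis using GG_lb1'[of "Ti y"] True `t \<le> S` unfolding V t_out_of_n_def S_def by simp
    next
      case False
      thus ?thesis using GG_lb1[of "Ti y"] `t \<le> S` unfolding V t_out_of_n_def S_def by simp
    qed
  next
    case False
    thus ?thesis using GG_lb0[of "of_int (if y (m-1) then 1 else 0)" "Ti y"]
      unfolding V t_out_of_n_def S_def by simp
  qed
  define wit where "wit Y b = (\<lambda>j::nat. j < Y \<or> (j = m - 1 \<and> b))" for Y b
  have wc: "Y \<le> m - 1 \<Longrightarrow> wit Y b \<in> cube m" for Y b
    using assms(4) unfolding cube_def wit_def by auto
  have wY: "Y \<le> m - 1 \<Longrightarrow> card {j. j < m - 1 \<and> wit Y b j} = Y" for Y b
  proof -
    assume "Y \<le> m - 1"
    hence "{j. j < m - 1 \<and> wit Y b j} = {..<Y}" unfolding wit_def by auto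
    thus ?thesis by simp
  qed
  have wb: "Y \<le> m - 1 \<Longrightarrow> wit Y b (m - 1) = b" for Y b
    unfolding wit_def by auto
  have ach: "\<exists>y\<in>cube m. ?V y = t_out_of_n t n x"
  proof (cases "t \<le> S")
    case True
    define Y where "Y = (S - 1) div 2"
    have Y: "Y \<le> m - 1" unfolding Y_def using Sn assms by linarith
    have "Ti (wit Y False) = 1 \<or> Ti (wit Y False) = 2"
    proof -
      have "Ti (wit Y False) = int S - 2 * int Y" unfolding Ti_def wY[OF Y] wb[OF Y] by simp
      moreover have "S \<ge> 1" using True assms by simp
      ultimately show ?thesis unfolding Y_def by presburger
    qed
    hence "?V (wit Y False) = 1" unfolding V wb[OF Y] using GG_eq by simp
    thus ?thesis using wc[OF Y] True unfolding t_out_of_n_def S_def by auto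
  next
    case False
    define Y where "Y = (S + 2*m - t) div 2"
    have Y: "Y \<le> m - 1" unfolding Y_def using False assms by linarith
    have "Ti (wit Y True) = 1 \<or> Ti (wit Y True) = 2"
    proof -
      have "Ti (wit Y True) = int S - 2 * int Y + int (2*m+1) - int t" unfolding Ti_def wY[OF Y] wb[OF Y] by simp
      moreover have "S + 2*m \<ge> t" using assms by simp
      ultimately show ?thesis unfolding Y_def by presburger
    qed
    hence "?V (wit Y True) = 0" unfolding V wb[OF Y] using GG_eq by simp
    thus ?thesis using wc[OF Y] False unfolding t_out_of_n_def S_def by auto
  qed
  define VV where "VV = ?V"
  have lb': "\<forall>y. t_out_of_n t n x \<le> VV y" using lb unfolding VV_def by simp
  have ach': "\<exists>y\<in>cube m. VV y = t_out_of_n t n x" using ach unfolding VV_def by simp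
  have fin: "finite (VV ` cube m)" using cube_finite by simp
  have "Min (VV ` cube m) = t_out_of_n t n x"
  proof (rule Min_eqI[OF fin])
    show "\<And>v. v \<in> VV ` cube m \<Longrightarrow> t_out_of_n t n x \<le> v" using lb' by blast
    obtain y where y: "y \<in> cube m" "VV y = t_out_of_n t n x" using ach' by blast
    show "t_out_of_n t n x \<in> VV ` cube m" using y by (metis image_eqI)
  qed
  thus "t_out_of_n t n x = Min (?V ` cube m)" unfolding VV_def by simp
qed

theorem corollary3:
  fixes t n :: nat
  assumes "1 \<le> t" and "t \<le> n"
  shows "has_quadratization n (t_out_of_n t n) (nat \<lceil>real n / 2\<rceil>)"
proof -
  let ?m = "nat \<lceil>real n / 2\<rceil>"
  define c where "c = \<lceil>real n / 2\<rceil>"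
  have c1: "real n / 2 \<le> of_int c" unfolding c_def by (rule le_of_int_ceiling)
  have "0 < real n / 2" using assms by simp
  hence "(0::real) < of_int c" using c1 by linarith
  hence c2: "c \<ge> 1" by simp
  have "real n \<le> 2 * real_of_int c" using c1 by simp
  hence "int n \<le> 2 * c" by linarith
  hence a: "n \<le> 2 * ?m" unfolding c_def[symmetric] using c2 by linarith
  have "1 \<le> ?m" unfolding c_def[symmetric] using c2 by linarith
  thus ?thesis unfolding has_quadratization_def using main[OF assms a] by blast
qed

end
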